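(* Let $M$ be a smooth $n$-manifold with a torsion-free linear connection $\nabla$ and a symmetric $(0,2)$-tensor field $c$, and let $\widetilde{\nabla}$ be the linear connection on $T^{\ast}M$ given in the adapted frame by $\widetilde{\nabla}_{E_{\overline{i}}}E_{\overline{j}}=0$, $\widetilde{\nabla}_{E_{\overline{i}}}E_{j}=0$, $\widetilde{\nabla}_{E_{i}}E_{\overline{j}}=-\Gamma^{j}_{ih}E_{\overline{h}}$, $\widetilde{\nabla}_{E_{i}}E_{j}=\Gamma^{h}_{ij}E_{h}+\tfrac12(\nabla_i c_{jh}+\nabla_j c_{ih}-\nabla_h c_{ij})E_{\overline{h}}$. Then the curvature tensor $\widetilde R(X,Y)Z=\widetilde\nabla_X\widetilde\nabla_YZ-\widetilde\nabla_Y\widetilde\nabla_XZ-\widetilde\nabla_{[X,Y]}Z$ of $\widetilde\nabla$ satisfies $$\widetilde R(E_i,E_j)E_k=R_{ijk}^{\ \ \ h}E_h+\tfrac12\Big\{\nabla_i(\nabla_kc_{jh}-\nabla_hc_{jk})-\nabla_j(\nabla_kc_{ih}-\nabla_hc_{ik})-R_{ijk}^{\ \ \ m}c_{mh}-R_{ijh}^{\ \ \ m}c_{km}\Big\}E_{\overline h},$$ $$\widetilde R(E_i,E_j)E_{\overline k}=R_{jih}^{\ \ \ k}E_{\overline h},$$ and $\widetilde R(E_i,E_{\overline j})E_k=\widetilde R(E_i,E_{\overline j})E_{\overline k}=\widetilde R(E_{\overline i},E_j)E_k=\widetilde R(E_{\overline i},E_j)E_{\overline k}=\widetilde R(E_{\overline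 i},E_{\overline j})E_k=\widetilde R(E_{\overline i},E_{\overline j})E_{\overline k}=0$.
   Context: Summation convention; $\overline{i}=n+i$. $\Gamma^h_{ij}$ are the coefficients of $\nabla$ in local coordinates $(x^i)$; the curvature of $\nabla$ is $R(X,Y)=\nabla_X\nabla_Y-\nabla_Y\nabla_X-\nabla_{[X,Y]}$ with $R(\partial_i,\partial_j)\partial_k=R_{ijk}^{\ \ \ h}\partial_h$. $\nabla_ic_{jk}$ are the components of $\nabla c$ and $\nabla_i(\nabla_kc_{jh})$ those of $\nabla\nabla c$. On $T^{\ast}M$ use induced coordinates $(x^i,p_i)$, $\partial_{\overline i}=\partial/\partial p_i$, and the adapted frame $E_j=\partial_j+p_a\Gamma^a_{hj}\partial_{\overline h}$, $E_{\overline j}=\partial_{\overline j}$. *)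

theory Defs
  imports "HOL-Analysis.Analysis"
begin

text \<open>Everything is done in one coordinate chart: U is an open subset of R^n
 (coordinates x^i, indices of finite type 'n), and T*U = U x R^n with induced
 coordinates (x^i, p_i).  Indices of T*U are of type 'n + 'n: Inl i is the index
 i, Inr i is the barred index (n+i).  A vector field on T*U is given by its
 components w.r.t. the coordinate frame (d_i, d_{bar i}).\<close>

type_synonym 'n pt = "(real^'n) \<times> (real^'n)"
type_synonym 'n vf = "'n pt \<Rightarrow> ('n + 'n) \<Rightarrow> real"

definition dirderiv :: "'a::real_normed_vector \<Rightarrow> ('a \<Rightarrow> real) \<Rightarrow> 'a \<Rightarrow> real" where
  "dirderiv v f z = deriv (\<lambda>t. f (z + t *\<^sub>R v)) 0"

definition pdx :: "'n::finite \<Rightarrow> (real^'n \<Rightarrow> real) \<Rightarrow> real^'n \<Rightarrow> real" where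
  "pdx i f x = dirderiv (axis i 1) f x"

fun Ck_on :: "nat \<Rightarrow> (real^'n::finite) set \<Rightarrow> (real^'n \<Rightarrow> real) \<Rightarrow> bool" where
  "Ck_on 0 U f = continuous_on U f"
| "Ck_on (Suc k) U f = (f differentiable_on U \<and> (\<forall>i. Ck_on k U (pdx i f)))"

definition smooth_on :: "(real^'n::finite) set \<Rightarrow> (real^'n \<Rightarrow> real) \<Rightarrow> bool" where
  "smooth_on U f = (\<forall>k. Ck_on k U f)"

text \<open>Objects on M (in the chart).  Gam h i j x = Gamma^h_{ij}(x), c i j x = c_{ij}(x).\<close>

text \<open>Curvature components: R(d_i,d_j)d_k = R_{ijk}^h d_h, with nabla_{d_i} d_j = Gamma^h_{ij} d_h.\<close>
definition Rc :: "('n::finite \<Rightarrow> 'n \<Rightarrow> 'n \<Rightarrow> real^'n \<Rightarrow> real) \<Rightarrow> 'n \<Rightarrow> 'n \<Rightarrow> 'n \<Rightarrow> 'n \<Rightarrow> real^'n \<Rightarrow> real" where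
  "Rc Gam i j k h x =
     pdx i (Gam h j k) x - pdx j (Gam h i k) x
     + (\<Sum>a\<in>UNIV. Gam h i a x * Gam a j k x) - (\<Sum>a\<in>UNIV. Gam h j a x * Gam a i k x)"

definition nc :: "('n::finite \<Rightarrow> 'n \<Rightarrow> 'n \<Rightarrow> real^'n \<Rightarrow> real) \<Rightarrow> ('n \<Rightarrow> 'n \<Rightarrow> real^'n \<Rightarrow> real)
    \<Rightarrow> 'n \<Rightarrow> 'n \<Rightarrow> 'n \<Rightarrow> real^'n \<Rightarrow> real" where
  "nc Gam c i j k x = pdx i (c j k) x
     - (\<Sum>a\<in>UNIV. Gam a i j x * c a k x) - (\<Sum>a\<in>UNIV. Gam a i k x * c j a x)"

text \<open>nnc Gam c i k j h = nabla_i (nabla_k c_{jh}), the components of nabla nabla c.\<close>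
definition nnc :: "('n::finite \<Rightarrow> 'n \<Rightarrow> 'n \<Rightarrow> real^'n \<Rightarrow> real) \<Rightarrow> ('n \<Rightarrow> 'n \<Rightarrow> real^'n \<Rightarrow> real)
    \<Rightarrow> 'n \<Rightarrow> 'n \<Rightarrow> 'n \<Rightarrow> 'n \<Rightarrow> real^'n \<Rightarrow> real" where
  "nnc Gam c i k j h x = pdx i (nc Gam c k j h) x
     - (\<Sum>a\<in>UNIV. Gam a i k x * nc Gam c a j h x)
     - (\<Sum>a\<in>UNIV. Gam a i j x * nc Gam c k a h x)
     - (\<Sum>a\<in>UNIV. Gam a i h x * nc Gam c k j a x)"

definition cdir :: "('n::finite) + 'n \<Rightarrow> 'n pt" where
  "cdir A = (case A of Inl i \<Rightarrow> (axis i 1, 0) | Inr i \<Rightarrow> (0, axis i 1))"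

definition pd :: "('n::finite) + 'n \<Rightarrow> ('n pt \<Rightarrow> real) \<Rightarrow> 'n pt \<Rightarrow> real" where
  "pd A f z = dirderiv (cdir A) f z"

definition vapply :: "('n::finite) vf \<Rightarrow> ('n pt \<Rightarrow> real) \<Rightarrow> 'n pt \<Rightarrow> real" where
  "vapply X f z = (\<Sum>A\<in>UNIV. X z A * pd A f z)"

definition lie :: "('n::finite) vf \<Rightarrow> 'n vf \<Rightarrow> 'n vf" where
  "lie X Y = (\<lambda>z B. vapply X (\<lambda>w. Y w B) z - vapply Y (\<lambda>w. X w B) z)"

definition Eframe :: "('n::finite \<Rightarrow> 'n \<Rightarrow> 'n \<Rightarrow> real^'n \<Rightarrow> real) \<Rightarrow> 'n + 'n \<Rightarrow> 'n vf" where
  "Eframe Gam A z B = (case A of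
      Inl j \<Rightarrow> (case B of Inl h \<Rightarrow> (if h = j then 1 else 0)
                        | Inr h \<Rightarrow> (\<Sum>a\<in>UNIV. snd z $ a * Gam a h j (fst z)))
    | Inr j \<Rightarrow> (if B = Inr j then 1 else 0))"

text \<open>Components of a vector field with respect to the adapted frame
  (Y = frame_coord Y ^A E_A).\<close>
definition frame_coord :: "('n::finite \<Rightarrow> 'n \<Rightarrow> 'n \<Rightarrow> real^'n \<Rightarrow> real) \<Rightarrow> 'n vf \<Rightarrow> 'n pt \<Rightarrow> 'n + 'n \<Rightarrow> real" where
  "frame_coord Gam Y z A = (case A of
      Inl h \<Rightarrow> Y z (Inl h)
    | Inr h \<Rightarrow> Y z (Inr h) - (\<Sum>j\<in>UNIV. Y z (Inl j) * (\<Sum>a\<in>UNIV. snd z $ a * Gam a h j (fst z))))"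

text \<open>Adapted-frame components of tnabla_{E_A} E_B, as prescribed in the statement.\<close>
definition connEE :: "('n::finite \<Rightarrow> 'n \<Rightarrow> 'n \<Rightarrow> real^'n \<Rightarrow> real) \<Rightarrow> ('n \<Rightarrow> 'n \<Rightarrow> real^'n \<Rightarrow> real)
    \<Rightarrow> 'n + 'n \<Rightarrow> 'n + 'n \<Rightarrow> 'n pt \<Rightarrow> 'n + 'n \<Rightarrow> real" where
  "connEE Gam c A B z C = (case (A, B) of
      (Inr i, _) \<Rightarrow> 0
    | (Inl i, Inr j) \<Rightarrow> (case C of Inl h \<Rightarrow> 0 | Inr h \<Rightarrow> - Gam j i h (fst z))
    | (Inl i, Inl j) \<Rightarrow> (case C of Inl h \<Rightarrow> Gam h i j (fst z)
          | Inr h \<Rightarrow> (1/2) * (nc Gam c i j h (fst z) + nc Gam c j i h (fst z) - nc Gam c h i j (fst z))))"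

text \<open>The linear connection tnabla on T*U determined by these frame values
 (via linearity and the Leibniz rule):
 tnabla_X Y = (X(Y^C) + X^A Y^D (tnabla_{E_A}E_D)^C) E_C  in frame components.\<close>
definition tnabla :: "('n::finite \<Rightarrow> 'n \<Rightarrow> 'n \<Rightarrow> real^'n \<Rightarrow> real) \<Rightarrow> ('n \<Rightarrow> 'n \<Rightarrow> real^'n \<Rightarrow> real)
    \<Rightarrow> 'n vf \<Rightarrow> 'n vf \<Rightarrow> 'n vf" where
  "tnabla Gam c X Y = (\<lambda>z B. \<Sum>C\<in>UNIV.
      (vapply X (\<lambda>w. frame_coord Gam Y w C) z
       + (\<Sum>A\<in>UNIV. \<Sum>D\<in>UNIV. frame_coord Gam X z A * frame_coord Gam Y z D * connEE Gam c A D z C))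
      * Eframe Gam C z B)"

definition curv :: "('n vf \<Rightarrow> 'n vf \<Rightarrow> 'n vf) \<Rightarrow> 'n vf \<Rightarrow> 'n vf \<Rightarrow> 'n vf \<Rightarrow> ('n::finite) vf" where
  "curv nab X Y Z = (\<lambda>z B. nab X (nab Y Z) z B - nab Y (nab X Z) z B - nab (lie X Y) Z z B)"

end

theory Submission
  imports Defs
begin


lemma dd_has_aux:
  fixes f :: "'a::real_normed_vector \<Rightarrow> real"
  assumes fd: "(f has_derivative f') (at y)" and e: "w + s0 *\<^sub>R u = y"
  shows "((\<lambda>s. f (w + s *\<^sub>R u)) has_real_derivative f' u) (at s0)"
proof -
  have lin: "linear f'" using fd by (rule has_derivative_linear)
  have 1: "((\<lambda>s. w + s *\<^sub>R u) has_derivative (\<lambda>h. h *\<^sub>R u)) (at s0)"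
    by (auto intro!: derivative_eq_intros)
  have 2: "((\<lambda>s. f (w + s *\<^sub>R u)) has_derivative (\<lambda>h. f' (h *\<^sub>R u))) (at s0)"
    using has_derivative_compose[OF 1, of f f'] fd e by simp
  have "(\<lambda>h. f' (h *\<^sub>R u)) = (*) (f' u)"
    using lin by (auto simp: linear_scale)
  with 2 show ?thesis by (simp add: has_field_derivative_def)
qed

lemma dirderiv_eq_frechet:
  fixes f :: "'a::real_normed_vector \<Rightarrow> real"
  assumes fd: "(f has_derivative f') (at y)"
  shows "dirderiv u f y = f' u"
  unfolding dirderiv_def
  by (rule DERIV_imp_deriv, rule dd_has_aux[OF fd]) simp

lemma dd_has:
  fixes f :: "'a::real_normed_vector \<Rightarrow> real"
  assumes "f differentiable (at y)" and "w + s0 *\<^sub>R u = y"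
  shows "((\<lambda>s. f (w + s *\<^sub>R u)) has_real_derivative dirderiv u f y) (at s0)"
proof -
  obtain f' where fd: "(f has_derivative f') (at y)" using assms(1) by (auto simp: differentiable_def)
  show ?thesis using dd_has_aux[OF fd assms(2)] dirderiv_eq_frechet[OF fd] by simp
qed

lemma dd_eq:
  fixes f :: "'a::real_normed_vector \<Rightarrow> real"
  assumes "((\<lambda>t. f (y + t *\<^sub>R u)) has_real_derivative D) (at 0)"
  shows "dirderiv u f y = D"
  unfolding dirderiv_def using assms by (rule DERIV_imp_deriv)

lemma clairaut:
  fixes f :: "'a::real_normed_vector \<Rightarrow> real"
  assumes U: "open U" and xU: "x \<in> U"
    and df: "\<And>y. y \<in> U \<Longrightarrow> f differentiable (at y)"
    and du: "\<And>y. y \<in> U \<Longrightarrow> dirderiv u f differentiable (at y)"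
    and dv: "\<And>y. y \<in> U \<Longrightarrow> dirderiv v f differentiable (at y)"
    and cA: "continuous_on U (dirderiv v (dirderiv u f))"
    and cB: "continuous_on U (dirderiv u (dirderiv v f))"
  shows "dirderiv v (dirderiv u f) x = dirderiv u (dirderiv v f) x"
proof -
  define A where "A = dirderiv v (dirderiv u f)"
  define B where "B = dirderiv u (dirderiv v f)"
  define fu where "fu = dirderiv u f"
  define fv where "fv = dirderiv v f"
  obtain r where r: "r > 0" "ball x r \<subseteq> U" using U xU open_contains_ball by blast
  define K where "K = norm u + norm v + 1"
  have K: "K > 0" unfolding K_def by (simp add: add_nonneg_pos)
  have close: "dist (x + a *\<^sub>R u + b *\<^sub>R v) x \<le> h * (norm u + norm v)"
    if "0 \<le> a" "a \<le> h" "0 \<le> b" "b \<le> h" for a b h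
  proof -
    have "norm (a *\<^sub>R u + b *\<^sub>R v) \<le> norm (a *\<^sub>R u) + norm (b *\<^sub>R v)"
      by (rule norm_triangle_ineq)
    also have "\<dots> = a * norm u + b * norm v" using that by simp
    also have "\<dots> \<le> h * norm u + h * norm v"
      using that by (intro add_mono mult_right_mono) auto
    finally show ?thesis by (simp add: dist_norm add.assoc distrib_left)
  qed
  have inU: "x + a *\<^sub>R u + b *\<^sub>R v \<in> U" if "0 \<le> a" "a \<le> h" "0 \<le> b" "b \<le> h" "h * K < r" for a b h
  proof -
    have "h * (norm u + norm v) \<le> h * K" using that unfolding K_def
      by (intro mult_left_mono) auto
    hence "dist (x + a *\<^sub>R u + b *\<^sub>R v) x < r" using close[OF that(1-4)] that(5) by linarith
    thus ?thesis using r by (auto simp: dist_commute)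
  qed
  have claim: "\<exists>a b a' b'. 0 \<le> a \<and> a \<le> h \<and> 0 \<le> b \<and> b \<le> h \<and> 0 \<le> a' \<and> a' \<le> h \<and> 0 \<le> b' \<and> b' \<le> h
      \<and> A (x + a *\<^sub>R u + b *\<^sub>R v) = B (x + a' *\<^sub>R u + b' *\<^sub>R v)"
    if h: "0 < h" "h * K < r" for h
  proof -
    define P where "P a b = x + a *\<^sub>R u + b *\<^sub>R v" for a b
    have PU: "P a b \<in> U" if "0 \<le> a" "a \<le> h" "0 \<le> b" "b \<le> h" for a b
      using inU[OF that h(2)] by (simp add: P_def)
    define \<Delta> where "\<Delta> = f (P h h) - f (P h 0) - f (P 0 h) + f (P 0 0)"
    have "\<exists>\<xi>. 0 < \<xi> \<and> \<xi> < h \<and> (f (P h h) - f (P h 0)) - (f (P 0 h) - f (P 0 0)) = (h - 0) * (fu (P \<xi> h) - fu (P \<xi> 0))"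
    proof (rule MVT2[OF h(1), where f = "\<lambda>s. f (P s h) - f (P s 0)"])
      fix s assume s: "0 \<le> s" "s \<le> h"
      have e1: "(x + h *\<^sub>R v) + s *\<^sub>R u = P s h" by (simp add: P_def algebra_simps)
      have e2: "x + s *\<^sub>R u = P s 0" by (simp add: P_def)
      have d1: "((\<lambda>s. f ((x + h *\<^sub>R v) + s *\<^sub>R u)) has_real_derivative fu (P s h)) (at s)"
        unfolding fu_def by (rule dd_has[OF df[OF PU] e1]) (use s h in auto)
      have d2: "((\<lambda>s. f (x + s *\<^sub>R u)) has_real_derivative fu (P s 0)) (at s)"
        unfolding fu_def by (rule dd_has[OF df[OF PU] e2]) (use s h in auto)
      have "(\<lambda>s. f (P s h) - f (P s 0)) = (\<lambda>s. f ((x + h *\<^sub>R v) + s *\<^sub>R u) - f (x + s *\<^sub>R u))"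
        by (simp add: P_def algebra_simps)
      thus "((\<lambda>s. f (P s h) - f (P s 0)) has_real_derivative fu (P s h) - fu (P s 0)) (at s)"
        using DERIV_diff[OF d1 d2] by simp
    qed
    then obtain \<xi> where xi: "0 < \<xi>" "\<xi> < h" and eq1: "\<Delta> = h * (fu (P \<xi> h) - fu (P \<xi> 0))"
      unfolding \<Delta>_def by auto
    have "\<exists>\<eta>. 0 < \<eta> \<and> \<eta> < h \<and> fu (P \<xi> h) - fu (P \<xi> 0) = (h - 0) * A (P \<xi> \<eta>)"
    proof (rule MVT2[OF h(1), where f = "\<lambda>t. fu (P \<xi> t)"])
      fix t assume t: "0 \<le> t" "t \<le> h"
      have e: "(x + \<xi> *\<^sub>R u) + t *\<^sub>R v = P \<xi> t" by (simp add: P_def)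
      have "((\<lambda>t. fu ((x + \<xi> *\<^sub>R u) + t *\<^sub>R v)) has_real_derivative A (P \<xi> t)) (at t)"
        unfolding A_def fu_def by (rule dd_has[OF du[OF PU] e]) (use t xi in auto)
      thus "((\<lambda>t. fu (P \<xi> t)) has_real_derivative A (P \<xi> t)) (at t)" by (simp add: P_def)
    qed
    then obtain \<eta> where eta: "0 < \<eta>" "\<eta> < h" and eq2: "fu (P \<xi> h) - fu (P \<xi> 0) = h * A (P \<xi> \<eta>)"
      by auto
    have "\<exists>\<eta>. 0 < \<eta> \<and> \<eta> < h \<and> (f (P h h) - f (P 0 h)) - (f (P h 0) - f (P 0 0)) = (h - 0) * (fv (P h \<eta>) - fv (P 0 \<eta>))"
    proof (rule MVT2[OF h(1), where f = "\<lambda>t. f (P h t) - f (P 0 t)"])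
      fix t assume t: "0 \<le> t" "t \<le> h"
      have e1: "(x + h *\<^sub>R u) + t *\<^sub>R v = P h t" by (simp add: P_def algebra_simps)
      have e2: "x + t *\<^sub>R v = P 0 t" by (simp add: P_def)
      have d1: "((\<lambda>t. f ((x + h *\<^sub>R u) + t *\<^sub>R v)) has_real_derivative fv (P h t)) (at t)"
        unfolding fv_def by (rule dd_has[OF df[OF PU] e1]) (use t h in auto)
      have d2: "((\<lambda>t. f (x + t *\<^sub>R v)) has_real_derivative fv (P 0 t)) (at t)"
        unfolding fv_def by (rule dd_has[OF df[OF PU] e2]) (use t h in auto)
      have "(\<lambda>t. f (P h t) - f (P 0 t)) = (\<lambda>t. f ((x + h *\<^sub>R u) + t *\<^sub>R v) - f (x + t *\<^sub>R v))"
        by (simp add: P_def algebra_simps)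
      thus "((\<lambda>t. f (P h t) - f (P 0 t)) has_real_derivative fv (P h t) - fv (P 0 t)) (at t)"
        using DERIV_diff[OF d1 d2] by simp
    qed
    then obtain \<eta>' where eta': "0 < \<eta>'" "\<eta>' < h" and eq3: "\<Delta> = h * (fv (P h \<eta>') - fv (P 0 \<eta>'))"
      unfolding \<Delta>_def by (auto simp: algebra_simps)
    have "\<exists>\<xi>. 0 < \<xi> \<and> \<xi> < h \<and> fv (P h \<eta>') - fv (P 0 \<eta>') = (h - 0) * B (P \<xi> \<eta>')"
    proof (rule MVT2[OF h(1), where f = "\<lambda>s. fv (P s \<eta>')"])
      fix s assume s: "0 \<le> s" "s \<le> h"
      have e: "(x + \<eta>' *\<^sub>R v) + s *\<^sub>R u = P s \<eta>'" by (simp add: P_def algebra_simps)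
      have "((\<lambda>s. fv ((x + \<eta>' *\<^sub>R v) + s *\<^sub>R u)) has_real_derivative B (P s \<eta>')) (at s)"
        unfolding B_def fv_def by (rule dd_has[OF dv[OF PU] e]) (use s eta' in auto)
      moreover have "(\<lambda>s. fv ((x + \<eta>' *\<^sub>R v) + s *\<^sub>R u)) = (\<lambda>s. fv (P s \<eta>'))"
        by (simp add: P_def algebra_simps)
      ultimately show "((\<lambda>s. fv (P s \<eta>')) has_real_derivative B (P s \<eta>')) (at s)" by simp
    qed
    then obtain \<xi>' where xi': "0 < \<xi>'" "\<xi>' < h" and eq4: "fv (P h \<eta>') - fv (P 0 \<eta>') = h * B (P \<xi>' \<eta>')"
      by auto
    have q1: "\<Delta> = h * (h * A (P \<xi> \<eta>))" using eq1 eq2 by simp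
    have q2: "\<Delta> = h * (h * B (P \<xi>' \<eta>'))" using eq3 eq4 by simp
    have "h * (h * A (P \<xi> \<eta>)) = h * (h * B (P \<xi>' \<eta>'))" using q1 q2 by linarith
    hence "A (P \<xi> \<eta>) = B (P \<xi>' \<eta>')" using h by simp
    thus ?thesis unfolding P_def using xi eta xi' eta' by (intro exI[of _ \<xi>] exI[of _ \<eta>] exI[of _ \<xi>'] exI[of _ \<eta>']) auto
  qed
  show ?thesis
  proof (rule ccontr)
    assume ne: "dirderiv v (dirderiv u f) x \<noteq> dirderiv u (dirderiv v f) x"
    define e where "e = \<bar>A x - B x\<bar> / 2"
    have e: "e > 0" using ne unfolding e_def A_def B_def by simp
    have cA': "isCont A x" using cA U xU unfolding A_def by (simp add: continuous_on_eq_continuous_at)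
    have cB': "isCont B x" using cB U xU unfolding B_def by (simp add: continuous_on_eq_continuous_at)
    obtain d1 where d1: "d1 > 0" "\<And>y. dist y x < d1 \<Longrightarrow> dist (A y) (A x) < e"
      using cA' e unfolding continuous_at_eps_delta by blast
    obtain d2 where d2: "d2 > 0" "\<And>y. dist y x < d2 \<Longrightarrow> dist (B y) (B x) < e"
      using cB' e unfolding continuous_at_eps_delta by blast
    define h where "h = min (min d1 d2) r / (2 * K)"
    have hpos: "h > 0" unfolding h_def using d1 d2 r K by simp
    have hK: "h * K = min (min d1 d2) r / 2" unfolding h_def using K by (simp add: field_simps)
    have hKr: "h * K < r" using hK r d1 d2 by linarith
    obtain a b a' b' where ab: "0 \<le> a" "a \<le> h" "0 \<le> b" "b \<le> h" "0 \<le> a'" "a' \<le> h" "0 \<le> b'" "b' \<le> h"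
      and eq: "A (x + a *\<^sub>R u + b *\<^sub>R v) = B (x + a' *\<^sub>R u + b' *\<^sub>R v)"
      using claim[OF hpos hKr] by blast
    have "h * (norm u + norm v) < h * K" using hpos unfolding K_def by simp
    hence hl: "h * (norm u + norm v) < min d1 d2" using hK d1 d2 by linarith
    have 1: "dist (A (x + a *\<^sub>R u + b *\<^sub>R v)) (A x) < e"
      by (rule d1(2)) (use close[OF ab(1-4)] hl in linarith)
    have 2: "dist (B (x + a' *\<^sub>R u + b' *\<^sub>R v)) (B x) < e"
      by (rule d2(2)) (use close[OF ab(5-8)] hl in linarith)
    have "\<bar>A x - B x\<bar> < 2 * e" using 1 2 eq unfolding dist_real_def by linarith
    thus False unfolding e_def by simp
  qed
qed



lemma sum_plus: "(\<Sum>C\<in>(UNIV::('a::finite + 'b::finite) set). f C) = (\<Sum>i\<in>UNIV. f (Inl i)) + (\<Sum>i\<in>UNIV. f (Inr i))"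
proof -
  have "(\<Sum>C\<in>(UNIV::('a + 'b) set). f C) = (\<Sum>C\<in>(UNIV <+> UNIV). f C)" by simp
  also have "\<dots> = (\<Sum>i\<in>UNIV. f (Inl i)) + (\<Sum>i\<in>UNIV. f (Inr i))"
    by (subst sum.Plus) (simp_all add: comp_def)
  finally show ?thesis .
qed

lemma sum_if_out: "(\<Sum>x\<in>S. if P then f x else 0) = (if P then sum f S else (0::real))"
  by simp

lemma sum_delta_r [simp]: "(\<Sum>j\<in>UNIV. (if j = k then 1 else 0) * (g (j::'a::finite)::real)) = g k"
  by (simp add: if_distrib[of "\<lambda>x. x * _"] cong: if_cong)
lemma sum_delta_l [simp]: "(\<Sum>j\<in>UNIV. (g (j::'a::finite)::real) * (if j = k then 1 else 0)) = g k"
  by (simp add: if_distrib[of "\<lambda>x. _ * x"] cong: if_cong)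
lemma sum_delta_r' [simp]: "(\<Sum>j\<in>UNIV. (if k = j then 1 else 0) * (g (j::'a::finite)::real)) = g k"
  by (simp add: if_distrib[of "\<lambda>x. x * _"] cong: if_cong)
lemma sum_delta_l' [simp]: "(\<Sum>j\<in>UNIV. (g (j::'a::finite)::real) * (if k = j then 1 else 0)) = g k"
  by (simp add: if_distrib[of "\<lambda>x. _ * x"] cong: if_cong)

lemma fc_Inl: "frame_coord Gam Y z (Inl h) = Y z (Inl h)"
  by (simp add: frame_coord_def)

lemma fc_E: "frame_coord Gam (Eframe Gam A) w C = (if C = A then 1 else 0)"
  by (cases A; cases C) (simp_all add: frame_coord_def Eframe_def)

lemma fc_comb: "frame_coord Gam (\<lambda>z B. \<Sum>C\<in>UNIV. f z C * Eframe Gam C z B) w D = f w D"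
  by (cases D) (simp_all add: frame_coord_def Eframe_def sum_plus sum_distrib_right)

lemma pd_const [simp]: "pd A (\<lambda>w. k) z = 0"
  by (simp add: pd_def dirderiv_def)

lemma vapply_const [simp]: "vapply X (\<lambda>w. k) z = 0"
  by (simp add: vapply_def)

lemma pd_fst_Inl: "pd (Inl i) (\<lambda>w. f (fst w)) z = pdx i f (fst z)"
  by (simp add: pd_def dirderiv_def cdir_def pdx_def)

lemma pd_fst_Inr: "pd (Inr i) (\<lambda>w. f (fst w)) z = 0"
  by (simp add: pd_def dirderiv_def cdir_def)

lemma vapply_E_Inl: "vapply (Eframe Gam (Inl i)) (\<lambda>w. f (fst w)) z = pdx i f (fst z)"
  by (simp add: vapply_def sum_plus Eframe_def pd_fst_Inl pd_fst_Inr)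

lemma vapply_E_Inr: "vapply (Eframe Gam (Inr i)) (\<lambda>w. f (fst w)) z = 0"
  by (simp add: vapply_def sum_plus Eframe_def pd_fst_Inl pd_fst_Inr)

lemma fc_tn: "frame_coord Gam (tnabla Gam c X Y) w C =
   vapply X (\<lambda>w. frame_coord Gam Y w C) w
   + (\<Sum>A\<in>UNIV. \<Sum>D\<in>UNIV. frame_coord Gam X w A * frame_coord Gam Y w D * connEE Gam c A D w C)"
  unfolding tnabla_def by (rule fc_comb)

lemma tn_expand: "tnabla Gam c X Y z B = (\<Sum>C\<in>UNIV. frame_coord Gam (tnabla Gam c X Y) z C * Eframe Gam C z B)"
  unfolding fc_tn by (simp add: tnabla_def)

lemma fc_tn_EE: "frame_coord Gam (tnabla Gam c (Eframe Gam A) (Eframe Gam D)) w C = connEE Gam c A D w C"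
  by (simp add: fc_tn fc_E if_distrib[of "\<lambda>x. x * _"] sum_if_out sum.delta sum.delta' cong: if_cong)

definition conn0 where
  "conn0 Gam c A B x C = (case (A, B) of
      (Inr i, _) \<Rightarrow> 0
    | (Inl i, Inr j) \<Rightarrow> (case C of Inl h \<Rightarrow> 0 | Inr h \<Rightarrow> - Gam j i h x)
    | (Inl i, Inl j) \<Rightarrow> (case C of Inl h \<Rightarrow> Gam h i j x
          | Inr h \<Rightarrow> (1/2) * (nc Gam c i j h x + nc Gam c j i h x - nc Gam c h i j x)))"

lemma connEE_conn0: "connEE Gam c A D w C = conn0 Gam c A D (fst w) C"
  by (simp add: connEE_def conn0_def)

lemma vapply_conn_Inl: "vapply (Eframe Gam (Inl i)) (\<lambda>w. connEE Gam c B D w C) z = pdx i (\<lambda>x. conn0 Gam c B D x C) (fst z)"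
  unfolding connEE_conn0 using vapply_E_Inl[of Gam i "\<lambda>x. conn0 Gam c B D x C" z] by simp

lemma vapply_conn_Inr: "vapply (Eframe Gam (Inr i)) (\<lambda>w. connEE Gam c B D w C) z = 0"
  unfolding connEE_conn0 using vapply_E_Inr[of Gam i "\<lambda>x. conn0 Gam c B D x C" z] by simp

lemma lie_Inl: "lie (Eframe Gam A) (Eframe Gam B) z (Inl h) = 0"
proof -
  have "\<And>X. (\<lambda>w. Eframe Gam X w (Inl h)) = (\<lambda>w. Eframe Gam X z (Inl h))"
    by (auto simp: Eframe_def split: sum.split)
  thus ?thesis unfolding lie_def by (metis vapply_const diff_self)
qed

lemma fc_tn_lie: "frame_coord Gam (tnabla Gam c (lie (Eframe Gam A) (Eframe Gam B)) (Eframe Gam D)) z C = 0"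
  unfolding fc_tn by (simp add: fc_E sum_plus fc_Inl lie_Inl connEE_def)

definition ccoef where
  "ccoef Gam c A B D z C =
     vapply (Eframe Gam A) (\<lambda>w. connEE Gam c B D w C) z + (\<Sum>D'\<in>UNIV. connEE Gam c B D z D' * connEE Gam c A D' z C)
   - (vapply (Eframe Gam B) (\<lambda>w. connEE Gam c A D w C) z + (\<Sum>D'\<in>UNIV. connEE Gam c A D z D' * connEE Gam c B D' z C))"

lemma fc_tn2: "frame_coord Gam (tnabla Gam c (Eframe Gam A) (tnabla Gam c (Eframe Gam B) (Eframe Gam D))) z C
   = vapply (Eframe Gam A) (\<lambda>w. connEE Gam c B D w C) z + (\<Sum>D'\<in>UNIV. connEE Gam c B D z D' * connEE Gam c A D' z C)"
  apply (subst fc_tn)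
  apply (simp add: fc_tn_EE fc_E if_distrib[of "\<lambda>x. x * _"] sum_if_out sum.delta sum.delta' cong: if_cong)
  done

lemma curv_frame: "curv (tnabla Gam c) (Eframe Gam A) (Eframe Gam B) (Eframe Gam D) z
   = (\<lambda>B'. \<Sum>C\<in>UNIV. ccoef Gam c A B D z C * Eframe Gam C z B')"
proof
  fix B'
  show "curv (tnabla Gam c) (Eframe Gam A) (Eframe Gam B) (Eframe Gam D) z B' = (\<Sum>C\<in>UNIV. ccoef Gam c A B D z C * Eframe Gam C z B')"
    unfolding curv_def
    apply (subst (1 2 3) tn_expand)
    apply (simp only: fc_tn2 fc_tn_lie ccoef_def)
    apply (simp add: sum_subtractf[symmetric] algebra_simps)
    done
qed



lemma pdx_has: "f differentiable (at x) \<Longrightarrow> ((\<lambda>t. f (x + t *\<^sub>R axis i 1)) has_real_derivative pdx i f x) (at 0)"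
  unfolding pdx_def by (rule dd_has) simp_all

lemma pdx_eq: "((\<lambda>t. f (x + t *\<^sub>R axis i 1)) has_real_derivative D) (at 0) \<Longrightarrow> pdx i f x = D"
  unfolding pdx_def by (rule dd_eq)

lemma pdx_const [simp]: "pdx i (\<lambda>y. k) x = 0"
  by (simp add: pdx_def dirderiv_def)

lemma pdx_add:
  assumes "f differentiable (at x)" "g differentiable (at x)"
  shows "pdx i (\<lambda>y. f y + g y) x = pdx i f x + pdx i g x"
  by (rule pdx_eq) (use DERIV_add[OF pdx_has[OF assms(1)] pdx_has[OF assms(2)]] in simp)

lemma pdx_diff:
  assumes "f differentiable (at x)" "g differentiable (at x)"
  shows "pdx i (\<lambda>y. f y - g y) x = pdx i f x - pdx i g x"
  by (rule pdx_eq) (use DERIV_diff[OF pdx_has[OF assms(1)] pdx_has[OF assms(2)]] in simp)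

lemma pdx_mult:
  assumes "f differentiable (at x)" "g differentiable (at x)"
  shows "pdx i (\<lambda>y. f y * g y) x = pdx i f x * g x + f x * pdx i g x"
proof (rule pdx_eq)
  show "((\<lambda>t. f (x + t *\<^sub>R axis i 1) * g (x + t *\<^sub>R axis i 1)) has_real_derivative pdx i f x * g x + f x * pdx i g x) (at 0)"
    using DERIV_mult[OF pdx_has[OF assms(1)] pdx_has[OF assms(2)]] by (simp add: algebra_simps)
qed

lemma pdx_cmult:
  assumes "f differentiable (at x)"
  shows "pdx i (\<lambda>y. k * f y) x = k * pdx i f x"
  by (rule pdx_eq) (use DERIV_cmult[OF pdx_has[OF assms(1)], of k] in simp)

lemma pdx_minus:
  assumes "f differentiable (at x)"
  shows "pdx i (\<lambda>y. - f y) x = - pdx i f x"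
  by (rule pdx_eq) (use DERIV_minus[OF pdx_has[OF assms(1)]] in simp)

lemma pdx_sum:
  assumes "\<And>a. f a differentiable (at x)"
  shows "pdx i (\<lambda>y. \<Sum>a\<in>(UNIV::'b::finite set). f a y) x = (\<Sum>a\<in>UNIV. pdx i (f a) x)"
  by (rule pdx_eq) (rule DERIV_sum, rule pdx_has[OF assms])

lemma pdx_local:
  assumes U: "open U" and xU: "x \<in> U" and eq: "\<And>y. y \<in> U \<Longrightarrow> f y = g y"
  shows "pdx i f x = pdx i g x"
  unfolding pdx_def dirderiv_def
proof (rule deriv_cong_ev[OF _ refl])
  let ?S = "(\<lambda>t::real. x + t *\<^sub>R axis i 1) -` U"
  have "open ?S" by (rule open_vimage[OF U]) (intro continuous_intros)
  moreover have "0 \<in> ?S" using xU by simp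
  ultimately show "\<forall>\<^sub>F t in nhds 0. f (x + t *\<^sub>R axis i 1) = g (x + t *\<^sub>R axis i 1)"
    unfolding eventually_nhds using eq by blast
qed

lemma smooth_pdx: "smooth_on U f \<Longrightarrow> smooth_on U (pdx i f)"
  unfolding smooth_on_def by (metis Ck_on.simps(2))

lemma smooth_diffb: "smooth_on U f \<Longrightarrow> open U \<Longrightarrow> x \<in> U \<Longrightarrow> f differentiable (at x)"
  unfolding smooth_on_def by (metis Ck_on.simps(2) differentiable_on_eq_differentiable_at)

lemma smooth_cont: "smooth_on U f \<Longrightarrow> continuous_on U f"
  unfolding smooth_on_def by (metis Ck_on.simps(1))

lemma pdx_dd: "pdx i f = dirderiv (axis i 1) f"
  by (rule ext) (simp add: pdx_def)

lemma schwarz: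
  assumes "smooth_on U f" "open U" "x \<in> U"
  shows "pdx i (pdx j f) x = pdx j (pdx i f) x"
proof -
  have "dirderiv (axis i 1) (dirderiv (axis j 1) f) x = dirderiv (axis j 1) (dirderiv (axis i 1) f) x"
  proof (rule clairaut[OF assms(2,3)])
    show "\<And>y. y \<in> U \<Longrightarrow> f differentiable at y" using smooth_diffb assms by blast
    show "\<And>y. y \<in> U \<Longrightarrow> dirderiv (axis j 1) f differentiable at y"
      using smooth_diffb[OF smooth_pdx[OF assms(1)] assms(2)] by (simp add: pdx_dd)
    show "\<And>y. y \<in> U \<Longrightarrow> dirderiv (axis i 1) f differentiable at y"
      using smooth_diffb[OF smooth_pdx[OF assms(1)] assms(2)] by (simp add: pdx_dd)
    show "continuous_on U (dirderiv (axis i 1) (dirderiv (axis j 1) f))"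
      using smooth_cont[OF smooth_pdx[OF smooth_pdx[OF assms(1)]]] by (simp add: pdx_dd)
    show "continuous_on U (dirderiv (axis j 1) (dirderiv (axis i 1) f))"
      using smooth_cont[OF smooth_pdx[OF smooth_pdx[OF assms(1)]]] by (simp add: pdx_dd)
  qed
  thus ?thesis by (simp add: pdx_dd)
qed



context
  fixes U :: "(real^'n::finite) set"
    and Gam :: "'n \<Rightarrow> 'n \<Rightarrow> 'n \<Rightarrow> real^'n \<Rightarrow> real"
    and c :: "'n \<Rightarrow> 'n \<Rightarrow> real^'n \<Rightarrow> real"
    and x :: "real^'n"
  assumes U: "open U" and sG: "\<forall>h a b. smooth_on U (Gam h a b)"
    and sc: "\<forall>a b. smooth_on U (c a b)" and xU: "x \<in> U"
begin

lemma dG [simp]: "Gam h a b differentiable (at x)"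
  using sG U xU smooth_diffb by blast
lemma dc [simp]: "c a b differentiable (at x)"
  using sc U xU smooth_diffb by blast
lemma dpc [simp]: "pdx m (c a b) differentiable (at x)"
  using sc U xU smooth_diffb smooth_pdx by blast

lemma nc_eq: "nc Gam c i j k = (\<lambda>y. pdx i (c j k) y - (\<Sum>a\<in>UNIV. Gam a i j y * c a k y) - (\<Sum>a\<in>UNIV. Gam a i k y * c j a y))"
  by (rule ext) (simp add: nc_def)

lemma dG' [simp]: "(\<lambda>y. Gam h a b y) differentiable (at x)"
  using dG by simp
lemma dc' [simp]: "(\<lambda>y. c a b y) differentiable (at x)"
  using dc by simp

lemma dsum1 [simp]: "(\<lambda>y. \<Sum>a\<in>UNIV. Gam a i j y * c a k y) differentiable (at x)"
  by (intro differentiable_sum ballI differentiable_mult dG dc) simp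
lemma dsum2 [simp]: "(\<lambda>y. \<Sum>a\<in>UNIV. Gam a i k y * c j a y) differentiable (at x)"
  by (intro differentiable_sum ballI differentiable_mult dG dc) simp

lemma dnc [simp]: "nc Gam c i j k differentiable (at x)"
  unfolding nc_eq by (intro differentiable_diff dpc dsum1 dsum2)

lemma dnc' [simp]: "(\<lambda>y. nc Gam c i j k y) differentiable (at x)"
  using dnc by simp

lemma pdx_nc: "pdx m (nc Gam c i j k) x = pdx m (pdx i (c j k)) x
   - (\<Sum>a\<in>UNIV. pdx m (Gam a i j) x * c a k x + Gam a i j x * pdx m (c a k) x)
   - (\<Sum>a\<in>UNIV. pdx m (Gam a i k) x * c j a x + Gam a i k x * pdx m (c j a) x)"
proof -
  have "pdx m (nc Gam c i j k) x = pdx m (pdx i (c j k)) x - pdx m (\<lambda>y. \<Sum>a\<in>UNIV. Gam a i j y * c a k y) x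
      - pdx m (\<lambda>y. \<Sum>a\<in>UNIV. Gam a i k y * c j a y) x"
    unfolding nc_eq
    by (subst pdx_diff, simp, simp, subst pdx_diff, simp_all)
  also have "pdx m (\<lambda>y. \<Sum>a\<in>UNIV. Gam a i j y * c a k y) x = (\<Sum>a\<in>UNIV. pdx m (Gam a i j) x * c a k x + Gam a i j x * pdx m (c a k) x)"
    by (subst pdx_sum) (simp_all add: pdx_mult)
  also have "pdx m (\<lambda>y. \<Sum>a\<in>UNIV. Gam a i k y * c j a y) x = (\<Sum>a\<in>UNIV. pdx m (Gam a i k) x * c j a x + Gam a i k x * pdx m (c j a) x)"
    by (subst pdx_sum) (simp_all add: pdx_mult)
  finally show ?thesis .
qed

lemma pdx_S: "pdx m (\<lambda>y. (1/2) * (nc Gam c i j h y + nc Gam c j i h y - nc Gam c h i j y)) x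
   = (1/2) * (pdx m (nc Gam c i j h) x + pdx m (nc Gam c j i h) x - pdx m (nc Gam c h i j) x)"
proof -
  have d: "(\<lambda>y. nc Gam c i j h y + nc Gam c j i h y) differentiable (at x)"
    by (intro differentiable_add dnc')
  show ?thesis
    by (simp only: pdx_cmult[OF differentiable_diff[OF d dnc']] pdx_diff[OF d dnc'] pdx_add[OF dnc' dnc'])
qed

lemma pdx_negG: "pdx m (\<lambda>y. - Gam j i h y) x = - pdx m (Gam j i h) x"
  using pdx_minus[OF dG] by simp

lemma schwarz_c: "pdx i (pdx j (c k h)) x = pdx j (pdx i (c k h)) x"
  using schwarz[OF _ U xU] sc by blast

end


definition dsum :: "('a::finite \<Rightarrow> 'a \<Rightarrow> real) \<Rightarrow> real" where
  "dsum f = (\<Sum>a\<in>UNIV. \<Sum>b\<in>UNIV. f a b)"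

lemma dsym: "(\<Sum>a\<in>UNIV. \<Sum>b\<in>UNIV. f a b) = dsum (\<lambda>a b. (f a b + f b a) / 2)"
proof -
  have "(\<Sum>a\<in>UNIV. \<Sum>b\<in>UNIV. f a b) = (\<Sum>a\<in>(UNIV::'a set). \<Sum>b\<in>UNIV. f b a)"
    by (rule sum.swap)
  thus ?thesis unfolding dsum_def by (simp add: sum.distrib sum_divide_distrib[symmetric])
qed

lemma main_alg:
  fixes G n :: "'n::finite \<Rightarrow> 'n \<Rightarrow> 'n \<Rightarrow> real" and N T :: "'n \<Rightarrow> 'n \<Rightarrow> 'n \<Rightarrow> 'n \<Rightarrow> real"
  assumes Gs: "\<And>a b d. G a b d = G a d b"
    and TE: "\<And>i j k h. T i j k h = N i j k h - (\<Sum>a\<in>UNIV. G a i j * n a k h) - (\<Sum>a\<in>UNIV. G a i k * n j a h) - (\<Sum>a\<in>UNIV. G a i h * n j k a)"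
    and Ric: "T i j k h - T j i k h = Q"
  shows "(1/2) * (N i j k h + N i k j h - N i h j k) - (1/2) * (N j i k h + N j k i h - N j h i k)
     + (\<Sum>a\<in>UNIV. G a j k * ((1/2) * (n i a h + n a i h - n h i a)))
     - (\<Sum>a\<in>UNIV. ((1/2) * (n j k a + n k j a - n a j k)) * G a i h)
     - (\<Sum>a\<in>UNIV. G a i k * ((1/2) * (n j a h + n a j h - n h j a)))
     + (\<Sum>a\<in>UNIV. ((1/2) * (n i k a + n k i a - n a i k)) * G a j h)
   = (1/2) * ((T i k j h - T i h j k) - (T j k i h - T j h i k) + Q)"
  unfolding Ric[symmetric] TE
  by (simp add: sum_distrib_left sum_distrib_right sum_subtractf sum.distrib algebra_simps Gs[of _ j i])


lemma ricci_alg: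
  fixes G dC n :: "'n::finite \<Rightarrow> 'n \<Rightarrow> 'n \<Rightarrow> real" and C :: "'n \<Rightarrow> 'n \<Rightarrow> real"
    and dG ddC N T Rc :: "'n \<Rightarrow> 'n \<Rightarrow> 'n \<Rightarrow> 'n \<Rightarrow> real"
  assumes Gs: "\<And>a b d. G a b d = G a d b" and Cs: "\<And>a b. C a b = C b a"
    and dds: "ddC i j k h = ddC j i k h"
    and nE: "\<And>i j k. n i j k = dC i j k - (\<Sum>a\<in>UNIV. G a i j * C a k) - (\<Sum>a\<in>UNIV. G a i k * C j a)"
    and NE: "\<And>i j k h. N i j k h = ddC i j k h - (\<Sum>a\<in>UNIV. dG i a j k * C a h + G a j k * dC i a h)
                 - (\<Sum>a\<in>UNIV. dG i a j h * C k a + G a j h * dC i k a)"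
    and TE: "\<And>i j k h. T i j k h = N i j k h - (\<Sum>a\<in>UNIV. G a i j * n a k h) - (\<Sum>a\<in>UNIV. G a i k * n j a h)
                 - (\<Sum>a\<in>UNIV. G a i h * n j k a)"
    and RE: "\<And>i j k h. Rc i j k h = dG i h j k - dG j h i k + (\<Sum>a\<in>UNIV. G h i a * G a j k) - (\<Sum>a\<in>UNIV. G h j a * G a i k)"
  shows "T i j k h - T j i k h = - (\<Sum>m\<in>UNIV. Rc i j k m * C m h) - (\<Sum>m\<in>UNIV. Rc i j h m * C k m)"
  unfolding TE NE nE RE
  apply (simp add: dds Gs[of _ j i] Cs sum_distrib_left sum_distrib_right sum_subtractf sum.distrib algebra_simps)
  apply (simp only: dsym)
  apply (simp add: algebra_simps Cs)
  done

context
  fixes U :: "(real^'n::finite) set"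
    and Gam :: "'n \<Rightarrow> 'n \<Rightarrow> 'n \<Rightarrow> real^'n \<Rightarrow> real"
    and c :: "'n \<Rightarrow> 'n \<Rightarrow> real^'n \<Rightarrow> real"
    and z :: "'n pt"
  assumes U: "open U" and sG: "\<forall>h a b. smooth_on U (Gam h a b)"
    and sc: "\<forall>a b. smooth_on U (c a b)" and xU: "fst z \<in> U"
    and Gsym: "\<forall>h a b. \<forall>x\<in>U. Gam h a b x = Gam h b a x"
    and csym: "\<forall>a b. \<forall>x\<in>U. c a b x = c b a x"
begin

lemma cc_main_L: "ccoef Gam c (Inl i) (Inl j) (Inl k) z (Inr h) =
     (1/2) * (pdx i (nc Gam c j k h) (fst z) + pdx i (nc Gam c k j h) (fst z) - pdx i (nc Gam c h j k) (fst z))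
   - (1/2) * (pdx j (nc Gam c i k h) (fst z) + pdx j (nc Gam c k i h) (fst z) - pdx j (nc Gam c h i k) (fst z))
     + (\<Sum>a\<in>UNIV. Gam a j k (fst z) * ((1/2) * (nc Gam c i a h (fst z) + nc Gam c a i h (fst z) - nc Gam c h i a (fst z))))
     - (\<Sum>a\<in>UNIV. ((1/2) * (nc Gam c j k a (fst z) + nc Gam c k j a (fst z) - nc Gam c a j k (fst z))) * Gam a i h (fst z))
     - (\<Sum>a\<in>UNIV. Gam a i k (fst z) * ((1/2) * (nc Gam c j a h (fst z) + nc Gam c a j h (fst z) - nc Gam c h j a (fst z))))
     + (\<Sum>a\<in>UNIV. ((1/2) * (nc Gam c i k a (fst z) + nc Gam c k i a (fst z) - nc Gam c a i k (fst z))) * Gam a j h (fst z))"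
  apply (simp only: ccoef_def vapply_conn_Inl vapply_conn_Inr)
  apply (simp only: conn0_def prod.case sum.case pdx_S[OF U sG sc xU] pdx_negG[OF U sG sc xU])
  apply (simp add: sum_plus connEE_conn0 conn0_def sum_subtractf sum_negf algebra_simps)
  done

lemma ricci_conc: "nnc Gam c i j k h (fst z) - nnc Gam c j i k h (fst z)
   = - (\<Sum>m\<in>UNIV. Rc Gam i j k m (fst z) * c m h (fst z)) - (\<Sum>m\<in>UNIV. Rc Gam i j h m (fst z) * c k m (fst z))"
  by (rule ricci_alg[where G = "\<lambda>a b d. Gam a b d (fst z)" and C = "\<lambda>a b. c a b (fst z)"
      and dC = "\<lambda>m a b. pdx m (c a b) (fst z)" and dG = "\<lambda>m a b d. pdx m (Gam a b d) (fst z)"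
      and ddC = "\<lambda>i j k h. pdx i (pdx j (c k h)) (fst z)" and n = "\<lambda>i j k. nc Gam c i j k (fst z)"
      and N = "\<lambda>i j k h. pdx i (nc Gam c j k h) (fst z)" and T = "\<lambda>i j k h. nnc Gam c i j k h (fst z)"
      and Rc = "\<lambda>i j k h. Rc Gam i j k h (fst z)"])
    (use Gsym csym xU schwarz_c[OF U sG sc xU] pdx_nc[OF U sG sc xU] in \<open>auto simp: nc_def nnc_def Rc_def\<close>)

lemma cc_main: "ccoef Gam c (Inl i) (Inl j) (Inl k) z (Inr h) =
     (1/2) * ( (nnc Gam c i k j h (fst z) - nnc Gam c i h j k (fst z))
                    - (nnc Gam c j k i h (fst z) - nnc Gam c j h i k (fst z))
                    - (\<Sum>m\<in>UNIV. Rc Gam i j k m (fst z) * c m h (fst z))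
                    - (\<Sum>m\<in>UNIV. Rc Gam i j h m (fst z) * c k m (fst z)) )"
proof -
  have Gs': "\<And>a b d. Gam a b d (fst z) = Gam a d b (fst z)" using Gsym xU by blast
  have "ccoef Gam c (Inl i) (Inl j) (Inl k) z (Inr h) =
     (1/2) * ( (nnc Gam c i k j h (fst z) - nnc Gam c i h j k (fst z))
                    - (nnc Gam c j k i h (fst z) - nnc Gam c j h i k (fst z))
                    + (- (\<Sum>m\<in>UNIV. Rc Gam i j k m (fst z) * c m h (fst z)) - (\<Sum>m\<in>UNIV. Rc Gam i j h m (fst z) * c k m (fst z))))"
    unfolding cc_main_L
    by (rule main_alg[where G = "\<lambda>a b d. Gam a b d (fst z)" and n = "\<lambda>i j k. nc Gam c i j k (fst z)"
      and N = "\<lambda>i j k h. pdx i (nc Gam c j k h) (fst z)" and T = "\<lambda>i j k h. nnc Gam c i j k h (fst z)",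
       OF Gs' _ ricci_conc]) (simp add: nnc_def)
  thus ?thesis by simp
qed

lemma cc_main_Inl: "ccoef Gam c (Inl i) (Inl j) (Inl k) z (Inl h) = Rc Gam i j k h (fst z)"
  apply (simp only: ccoef_def vapply_conn_Inl vapply_conn_Inr)
  apply (simp add: sum_plus connEE_conn0 conn0_def Rc_def algebra_simps)
  done

lemma cc_k_Inr: "ccoef Gam c (Inl i) (Inl j) (Inr k) z (Inr h) = Rc Gam j i h k (fst z)"
  apply (simp only: ccoef_def vapply_conn_Inl vapply_conn_Inr)
  apply (simp only: conn0_def prod.case sum.case pdx_negG[OF U sG sc xU])
  apply (simp add: sum_plus connEE_conn0 conn0_def Rc_def algebra_simps)
  done

lemma cc_k_Inl: "ccoef Gam c (Inl i) (Inl j) (Inr k) z (Inl h) = 0"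
  apply (simp only: ccoef_def vapply_conn_Inl vapply_conn_Inr)
  apply (simp add: sum_plus connEE_conn0 conn0_def)
  done

end

lemma cc_LR: "ccoef Gam c (Inl i) (Inr j) D z C = 0"
  apply (simp only: ccoef_def vapply_conn_Inl vapply_conn_Inr)
  apply (simp add: sum_plus connEE_conn0 conn0_def)
  done

lemma cc_RL: "ccoef Gam c (Inr i) (Inl j) D z C = 0"
  apply (simp only: ccoef_def vapply_conn_Inl vapply_conn_Inr)
  apply (simp add: sum_plus connEE_conn0 conn0_def)
  done

lemma cc_RR: "ccoef Gam c (Inr i) (Inr j) D z C = 0"
  apply (simp only: ccoef_def vapply_conn_Inl vapply_conn_Inr)
  apply (simp add: sum_plus connEE_conn0 conn0_def)
  done


theorem proposition4:
  fixes U :: "(real^'n::finite) set"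
    and Gam :: "'n \<Rightarrow> 'n \<Rightarrow> 'n \<Rightarrow> real^'n \<Rightarrow> real"
    and c :: "'n \<Rightarrow> 'n \<Rightarrow> real^'n \<Rightarrow> real"
    and z :: "'n pt" and i j k :: 'n
  assumes "open U"
    and "\<forall>h a b. smooth_on U (Gam h a b)"
    and "\<forall>a b. smooth_on U (c a b)"
    and "\<forall>h a b. \<forall>x\<in>U. Gam h a b x = Gam h b a x"
    and "\<forall>a b. \<forall>x\<in>U. c a b x = c b a x"
    and "fst z \<in> U"
  shows
    "curv (tnabla Gam c) (Eframe Gam (Inl i)) (Eframe Gam (Inl j)) (Eframe Gam (Inl k)) z =
       (\<lambda>B. \<Sum>h\<in>UNIV. Rc Gam i j k h (fst z) * Eframe Gam (Inl h) z B
          + (1/2) * ( (nnc Gam c i k j h (fst z) - nnc Gam c i h j k (fst z))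
                    - (nnc Gam c j k i h (fst z) - nnc Gam c j h i k (fst z))
                    - (\<Sum>m\<in>UNIV. Rc Gam i j k m (fst z) * c m h (fst z))
                    - (\<Sum>m\<in>UNIV. Rc Gam i j h m (fst z) * c k m (fst z)) )
            * Eframe Gam (Inr h) z B)
   \<and> curv (tnabla Gam c) (Eframe Gam (Inl i)) (Eframe Gam (Inl j)) (Eframe Gam (Inr k)) z =
       (\<lambda>B. \<Sum>h\<in>UNIV. Rc Gam j i h k (fst z) * Eframe Gam (Inr h) z B)
   \<and> curv (tnabla Gam c) (Eframe Gam (Inl i)) (Eframe Gam (Inr j)) (Eframe Gam (Inl k)) z = (\<lambda>B. 0)
   \<and> curv (tnabla Gam c) (Eframe Gam (Inl i)) (Eframe Gam (Inr j)) (Eframe Gam (Inr k)) z = (\<lambda>B. 0)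
   \<and> curv (tnabla Gam c) (Eframe Gam (Inr i)) (Eframe Gam (Inl j)) (Eframe Gam (Inl k)) z = (\<lambda>B. 0)
   \<and> curv (tnabla Gam c) (Eframe Gam (Inr i)) (Eframe Gam (Inl j)) (Eframe Gam (Inr k)) z = (\<lambda>B. 0)
   \<and> curv (tnabla Gam c) (Eframe Gam (Inr i)) (Eframe Gam (Inr j)) (Eframe Gam (Inl k)) z = (\<lambda>B. 0)
   \<and> curv (tnabla Gam c) (Eframe Gam (Inr i)) (Eframe Gam (Inr j)) (Eframe Gam (Inr k)) z = (\<lambda>B. 0)"
  proof -
  note A = assms(1,2,3,6,4,5)
  have c1: "curv (tnabla Gam c) (Eframe Gam (Inl i)) (Eframe Gam (Inl j)) (Eframe Gam (Inl k)) z =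
       (\<lambda>B. \<Sum>h\<in>UNIV. Rc Gam i j k h (fst z) * Eframe Gam (Inl h) z B
          + (1/2) * ( (nnc Gam c i k j h (fst z) - nnc Gam c i h j k (fst z))
                    - (nnc Gam c j k i h (fst z) - nnc Gam c j h i k (fst z))
                    - (\<Sum>m\<in>UNIV. Rc Gam i j k m (fst z) * c m h (fst z))
                    - (\<Sum>m\<in>UNIV. Rc Gam i j h m (fst z) * c k m (fst z)) )
            * Eframe Gam (Inr h) z B)"
    unfolding curv_frame
    by (rule ext) (simp only: sum_plus sum.distrib cc_main_Inl[OF A] cc_main[OF A])
  have c2: "curv (tnabla Gam c) (Eframe Gam (Inl i)) (Eframe Gam (Inl j)) (Eframe Gam (Inr k)) z =
       (\<lambda>B. \<Sum>h\<in>UNIV. Rc Gam j i h k (fst z) * Eframe Gam (Inr h) z B)"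
    unfolding curv_frame
    by (rule ext) (simp add: sum_plus cc_k_Inl[OF A] cc_k_Inr[OF A])
  show ?thesis
    using c1 c2 unfolding curv_frame by (simp add: cc_LR cc_RL cc_RR)
qed

end
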